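(* Consider a Gibbs-type feature model with parameters $\alpha<1$, $\theta>-\alpha$ and weights $(V_{n,k})$. Let $\mathbf Z^{(n)}$ be a sample of $n$ individuals with $K_n=k$ observed features $X_1,\dots,X_k$ of frequencies $m_1,\dots,m_k$. Let $Y_{n+1}$ be the number of features displayed by individual $n+1$ that are not among $X_1,\dots,X_k$, and let $A_{n+1,\ell}\in\{0,1\}$ indicate whether individual $n+1$ displays $X_\ell$. Then, for all $y\in\mathbb N_0$ and $(a_1,\dots,a_k)\in\{0,1\}^k$, $$P\big((Y_{n+1},A_{n+1,1},\dots,A_{n+1,k})=(y,a_1,\dots,a_k)\mid \mathbf Z^{(n)}\big)=\binom{k+y}{k}\frac{V_{n+1,k+y}}{V_{n,k}}\{(\theta+\alpha)_n\}^y(\theta+n)^k\prod_{\ell=1}^k\mathscr B\Big(a_\ell;\frac{m_\ell-\alpha}{\theta+n}\Big),$$ where $\mathscr B(a;p)=p^a(1-p)^{1-a}$.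
   Context: Notation: $(x)_m=\Gamma(x+m)/\Gamma(x)$ (Pochhammer symbol); $[n]=\{1,\dots,n\}$. Individuals $i=1,2,\dots$ each display a finite (possibly empty) set of features, identified by almost surely distinct labels. For the sample $\mathbf Z^{(n)}=(Z_1,\dots,Z_n)$ of the first $n$ individuals, $K_n$ is the number of distinct features displayed, labelled $X_1,\dots,X_{K_n}$ in order of appearance; $A_{i,\ell}\in\{0,1\}$ indicates whether individual $i$ displays $X_\ell$, and $m_\ell=\sum_{i=1}^nA_{i,\ell}\in[n]$. The ordered feature allocation is $F_n=(B_{n,1},\dots,B_{n,K_n})$, $B_{n,\ell}=\{i\in[n]:A_{i,\ell}=1\}$. The model admits an exchangeable feature probability function (EFPF) if there are symmetric functions $\pi_n:\bigcup_{k\ge0}[n]^k\to[0,1]$ with $P(F_n=f_n)=\pi_n(m_1,\dots,m_k)$ for every ordered feature allocation $f_n$ of $[n]$ (a sequence of $k$ nonempty subsets of $[n]$ with sizes $m_1,\dots,m_k$), all orderings of the same collection of sets being equally likely; the laws for different $n$ are consistent (the law for $n$ individuals is the marginal of that for $n+1$). The model is a Gibbs-type feature model with parameters $\alpha<1$, $\theta>-\alpha$ if $\pi_n(m_1,\dots,m_k)=V_{n,k}\prod_{\ell=1}^k(1-\alpha)_{m_\ell-1}(\theta+\alpha)_{n-m_\ell}$ for nonnegative weights $(V_{n,k})_{n\ge1,k\ge0}$ satisfying $V_{n,k}=\sum_{j\ge0}\frac{(k+j)!}{j!\,k!}\{(\theta+\alpha)_n\}^j(\theta+n)^kV_{n+1,k+j}$.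 *)

theory Defs
  imports "HOL-Probability.Probability"
begin

text \<open>An ordered feature allocation of the individuals 1..n: a list of nonempty
  subsets of {1..n} (the features, in order).\<close>
definition ofa :: "nat \<Rightarrow> nat set list \<Rightarrow> bool" where
  "ofa n f \<longleftrightarrow> (\<forall>B \<in> set f. B \<noteq> {} \<and> B \<subseteq> {1..n})"

definition restr :: "nat \<Rightarrow> nat set list \<Rightarrow> nat set list" where
  "restr n g = filter (\<lambda>B. B \<noteq> {}) (map (\<lambda>B. B \<inter> {1..n}) g)"

definition gibbs_efpf :: "real \<Rightarrow> real \<Rightarrow> (nat \<Rightarrow> nat \<Rightarrow> real) \<Rightarrow> nat \<Rightarrow> nat list \<Rightarrow> real" where
  "gibbs_efpf \<alpha> \<theta> V n ms =
     V n (length ms) * (\<Prod>m\<leftarrow>ms. pochhammer (1 - \<alpha>) (m - 1) * pochhammer (\<theta> + \<alpha>) (n - m))"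

definition gibbs_weights :: "real \<Rightarrow> real \<Rightarrow> (nat \<Rightarrow> nat \<Rightarrow> real) \<Rightarrow> bool" where
  "gibbs_weights \<alpha> \<theta> V \<longleftrightarrow>
     (\<forall>n k. 0 \<le> V n k) \<and>
     (\<forall>n\<ge>1. \<forall>k. (\<lambda>j. real ((k + j) choose k) * (pochhammer (\<theta> + \<alpha>) n) ^ j
                      * (\<theta> + real n) ^ k * V (Suc n) (k + j)) sums V n k)"

definition gibbs_feature_model ::
  "real \<Rightarrow> real \<Rightarrow> (nat \<Rightarrow> nat \<Rightarrow> real) \<Rightarrow> (nat \<Rightarrow> nat set list pmf) \<Rightarrow> bool" where
  "gibbs_feature_model \<alpha> \<theta> V P \<longleftrightarrow>
     \<alpha> < 1 \<and> \<theta> > - \<alpha> \<and> gibbs_weights \<alpha> \<theta> V \<and>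
     (\<forall>n\<ge>1. set_pmf (P n) \<subseteq> {f. ofa n f}) \<and>
     (\<forall>n\<ge>1. \<forall>f. ofa n f \<longrightarrow> pmf (P n) f = gibbs_efpf \<alpha> \<theta> V n (map card f)) \<and>
     (\<forall>n\<ge>1. map_pmf (restr n) (P (Suc n)) = P n)"

definition new_feats :: "nat \<Rightarrow> nat set list \<Rightarrow> nat" where
  "new_feats n g = length (filter (\<lambda>B. B = {Suc n}) g)"

text \<open>Indicator that individual n+1 displays the l-th old feature X_(l+1) (0-based l).\<close>
definition old_ind :: "nat \<Rightarrow> nat set list \<Rightarrow> nat \<Rightarrow> nat" where
  "old_ind n g l = (if Suc n \<in> filter (\<lambda>B. B \<inter> {1..n} \<noteq> {}) g ! l then 1 else 0)"

definition bern :: "nat \<Rightarrow> real \<Rightarrow> real" where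
  "bern a p = p ^ a * (1 - p) ^ (1 - a)"

end

theory Submission
  imports Defs
begin

definition bx :: "nat \<Rightarrow> nat set \<Rightarrow> nat \<Rightarrow> nat set" where
  "bx N B c = (if c = 1 then insert N B else B)"

function ext :: "nat \<Rightarrow> nat set list \<Rightarrow> nat list \<Rightarrow> nat \<Rightarrow> nat set list set" where
  "ext N [] a 0 = {[]}"
| "ext N [] a (Suc y) = (Cons {N}) ` ext N [] a y"
| "ext N (B#f) a 0 = (Cons (bx N B (hd a))) ` ext N f (tl a) 0"
| "ext N (B#f) a (Suc y) = (Cons {N}) ` ext N (B#f) a y \<union> (Cons (bx N B (hd a))) ` ext N f (tl a) (Suc y)"
  by pat_completeness auto
termination by (relation "Wellfounded.measure (\<lambda>(N,f,a,y). length f + y)") auto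

lemma restr_Cons: "restr n (X#g) = (if X \<inter> {1..n} = {} then restr n g else (X \<inter> {1..n}) # restr n g)"
  by (simp add: restr_def)
lemma restr_Nil: "restr n [] = []" by (simp add: restr_def)
lemma new_feats_Cons: "new_feats n (X#g) = (if X = {Suc n} then Suc (new_feats n g) else new_feats n g)"
  by (simp add: new_feats_def)
lemma new_feats_Nil: "new_feats n [] = 0" by (simp add: new_feats_def)
lemma old_ind_Cons: "old_ind n (X#g) l = (if X \<inter> {1..n} = {} then old_ind n g l
   else if l = 0 then (if Suc n \<in> X then 1 else 0) else old_ind n g (l - 1))"
  by (cases l) (auto simp: old_ind_def)
lemma ofa_Cons: "ofa m (X#g) = (X \<noteq> {} \<and> X \<subseteq> {1..m} \<and> ofa m g)"
  by (auto simp: ofa_def)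
lemma ofa_Nil: "ofa m []" by (simp add: ofa_def)

lemma ext_sub:
  assumes "\<forall>B\<in>set f. B \<noteq> {} \<and> B \<subseteq> {1..n}" "length a = length f" "set a \<subseteq> {0,1}"
      "ofa (Suc n) g" "restr n g = f" "new_feats n g = y" "\<forall>l<length f. old_ind n g l = a!l"
  shows "g \<in> ext (Suc n) f a y"
  using assms
proof (induction g arbitrary: f a y)
  case Nil
  then show ?case by (simp add: restr_Nil new_feats_Nil)
next
  case (Cons X g)
  from Cons.prems(4) have X: "X \<noteq> {}" "X \<subseteq> {1..Suc n}" and og: "ofa (Suc n) g"
    by (auto simp: ofa_Cons)
  show ?case
  proof (cases "X = {Suc n}")
    case True
    then have r: "restr n g = f" using Cons.prems(5) by (simp add: restr_Cons)
    obtain y' where y: "y = Suc y'" using Cons.prems(6) True by (auto simp add: new_feats_Cons)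
    have nf: "new_feats n g = y'" using Cons.prems(6) True y by (simp add: new_feats_Cons)
    have oi: "\<forall>l<length f. old_ind n g l = a!l" using Cons.prems(7) True by (simp add: old_ind_Cons)
    have IH: "g \<in> ext (Suc n) f a y'"
      using Cons.IH[OF Cons.prems(1-3) og r nf oi] .
    show ?thesis using IH True y by (cases f) auto
  next
    case False
    have ne: "X \<inter> {1..n} \<noteq> {}"
    proof
      assume e: "X \<inter> {1..n} = {}"
      have "X \<subseteq> {Suc n}"
      proof
        fix x assume "x \<in> X"
        with X(2) e have "x \<in> {1..Suc n}" "x \<notin> {1..n}" by auto
        then show "x \<in> {Suc n}" by auto
      qed
      with X(1) have "X = {Suc n}" by auto
      with False show False by simp
    qed
    obtain f' where f: "f = (X \<inter> {1..n}) # f'" and r: "restr n g = f'"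
      using Cons.prems(5) ne by (auto simp add: restr_Cons)
    have nf: "new_feats n g = y" using Cons.prems(6) False by (simp add: new_feats_Cons)
    obtain c a' where a: "a = c # a'" using Cons.prems(2) f by (cases a) auto
    have c: "c = (if Suc n \<in> X then 1 else 0)"
      using Cons.prems(7)[rule_format, of 0] f a ne by (simp add: old_ind_Cons)
    have oi: "\<forall>l<length f'. old_ind n g l = a'!l"
    proof (intro allI impI)
      fix l assume "l < length f'"
      then show "old_ind n g l = a'!l"
        using Cons.prems(7)[rule_format, of "Suc l"] f a ne by (simp add: old_ind_Cons)
    qed
    have IH: "\<And>y. new_feats n g = y \<Longrightarrow> g \<in> ext (Suc n) f' a' y"
      using Cons.IH[of f' a'] Cons.prems(1-3) og r oi f a by auto
    have Xeq: "X = bx (Suc n) (X \<inter> {1..n}) c"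
    proof -
      have "{1..Suc n} = insert (Suc n) {1..n}" by (auto)
      with X(2) have "X \<subseteq> insert (Suc n) {1..n}" by simp
      then show ?thesis using c by (auto simp: bx_def)
    qed
    show ?thesis
      using IH[OF nf] Xeq f a by (cases y) auto
  qed
qed

lemma ext_sup:
  assumes "g \<in> ext (Suc n) f a y" "\<forall>B\<in>set f. B \<noteq> {} \<and> B \<subseteq> {1..n}" "length a = length f" "set a \<subseteq> {0,1}"
  shows "ofa (Suc n) g \<and> restr n g = f \<and> new_feats n g = y \<and> (\<forall>l<length f. old_ind n g l = a!l)"
  using assms
proof (induction "Suc n" f a y arbitrary: g rule: ext.induct)
  case (1 a)
  then show ?case by (simp add: ofa_Nil restr_Nil new_feats_Nil)
next
  case (2 a y)
  then show ?case by (auto simp: ofa_Cons restr_Cons new_feats_Cons old_ind_Cons)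
next
  case (3 B f a)
  then obtain c a' where a: "a = c # a'" by (cases a) auto
  from 3 a obtain g' where g: "g = bx (Suc n) B c # g'" and g': "g' \<in> ext (Suc n) f a' 0" by auto
  have IH: "ofa (Suc n) g' \<and> restr n g' = f \<and> new_feats n g' = 0 \<and> (\<forall>l<length f. old_ind n g' l = a'!l)"
    using 3 a g' by auto
  have B: "B \<noteq> {}" "B \<subseteq> {1..n}" "c \<in> {0,1}" using 3 a by auto
  have bi: "bx (Suc n) B c \<inter> {1..n} = B" using B by (auto simp: bx_def)
  have bn: "bx (Suc n) B c \<noteq> {Suc n}" using B by (auto simp: bx_def)
  have bo: "bx (Suc n) B c \<noteq> {} \<and> bx (Suc n) B c \<subseteq> {1..Suc n}" using B by (auto simp: bx_def)
  have c: "(if Suc n \<in> bx (Suc n) B c then 1 else 0) = c" using B by (auto simp: bx_def)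
  show ?case
    using IH bi bn bo c B a unfolding g
    by (auto simp: ofa_Cons restr_Cons new_feats_Cons old_ind_Cons less_Suc_eq_0_disj)
next
  case (4 B f a y)
  have B: "B \<noteq> {}" "B \<subseteq> {1..n}" using 4 by auto
  from 4 obtain c a' where a: "a = c # a'" by (cases a) auto
  have cc: "c \<in> {0,1}" using 4 a by auto
  from "4.prems"(1) have "g \<in> (Cons {Suc n}) ` ext (Suc n) (B#f) a y \<or> g \<in> (Cons (bx (Suc n) B (hd a))) ` ext (Suc n) f (tl a) (Suc y)"
    by simp
  then show ?case
  proof
    assume "g \<in> (Cons {Suc n}) ` ext (Suc n) (B#f) a y"
    then obtain g' where g: "g = {Suc n} # g'" and g': "g' \<in> ext (Suc n) (B#f) a y" by auto
    have IH: "ofa (Suc n) g' \<and> restr n g' = B#f \<and> new_feats n g' = y \<and> (\<forall>l<length (B#f). old_ind n g' l = a!l)"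
      using "4.hyps"(1)[OF g'] 4 by auto
    show ?thesis using IH unfolding g by (auto simp: ofa_Cons restr_Cons new_feats_Cons old_ind_Cons)
  next
    assume "g \<in> (Cons (bx (Suc n) B (hd a))) ` ext (Suc n) f (tl a) (Suc y)"
    then obtain g' where g: "g = bx (Suc n) B c # g'" and g': "g' \<in> ext (Suc n) f a' (Suc y)" using a by auto
    have IH: "ofa (Suc n) g' \<and> restr n g' = f \<and> new_feats n g' = Suc y \<and> (\<forall>l<length f. old_ind n g' l = a'!l)"
      using "4.hyps"(2)[of g'] g' 4 a by auto
    have bi: "bx (Suc n) B c \<inter> {1..n} = B" using B by (auto simp: bx_def)
    have bn: "bx (Suc n) B c \<noteq> {Suc n}" using B by (auto simp: bx_def)
    have bo: "bx (Suc n) B c \<noteq> {} \<and> bx (Suc n) B c \<subseteq> {1..Suc n}" using B by (auto simp: bx_def)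
    have c: "(if Suc n \<in> bx (Suc n) B c then 1 else 0) = c" using B cc by (auto simp: bx_def)
    show ?thesis
      using IH bi bn bo c B a unfolding g
      by (auto simp: ofa_Cons restr_Cons new_feats_Cons old_ind_Cons less_Suc_eq_0_disj)
  qed
qed


lemma ext_finite: "finite (ext N f a y)"
  by (induction N f a y rule: ext.induct) auto

lemma bx_ne: assumes "B \<noteq> {}" "N \<notin> B" shows "bx N B c \<noteq> {N}"
  using assms by (auto simp: bx_def)

lemma ext_card:
  assumes "\<forall>B\<in>set f. B \<noteq> {} \<and> N \<notin> B"
  shows "card (ext N f a y) = (length f + y) choose (length f)"
  using assms
proof (induction N f a y rule: ext.induct)
  case (1 N a) then show ?case by simp
next
  case (2 N a y) then show ?case by (simp add: card_image)
next
  case (3 N B f a) then show ?case by (simp add: card_image)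
next
  case (4 N B f a y)
  have d: "(Cons {N}) ` ext N (B#f) a y \<inter> (Cons (bx N B (hd a))) ` ext N f (tl a) (Suc y) = {}"
    using bx_ne[of B N "hd a"] 4(3) by auto
  have "card (ext N (B#f) a (Suc y)) = card ((Cons {N}) ` ext N (B#f) a y) + card ((Cons (bx N B (hd a))) ` ext N f (tl a) (Suc y))"
    using d by (simp add: card_Un_disjoint ext_finite)
  also have "\<dots> = card (ext N (B#f) a y) + card (ext N f (tl a) (Suc y))"
    by (simp add: card_image)
  also have "\<dots> = ((Suc (length f) + y) choose (Suc (length f))) + ((length f + Suc y) choose (length f))"
    using 4 by simp
  also have "\<dots> = (length (B#f) + Suc y) choose length (B#f)"
    using binomial_Suc_Suc[of "length f + Suc y" "length f"] by simp
  finally show ?case .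
qed

lemma ext_prop:
  assumes "g \<in> ext N f a y" "\<forall>B\<in>set f. finite B \<and> N \<notin> B" "length a = length f" "set a \<subseteq> {0,1}"
  shows "length g = length f + y \<and>
    prod_list (map (\<lambda>B. h (card B)) g) = h 1 ^ y * (\<Prod>l<length f. h (card (f!l) + a!l))"
  using assms
proof (induction N f a y arbitrary: g rule: ext.induct)
  case (1 N a) then show ?case by simp
next
  case (2 N a y) then show ?case by auto
next
  case (3 N B f a)
  then obtain c a' where a: "a = c # a'" by (cases a) auto
  from 3 a obtain g' where g: "g = bx N B c # g'" and g': "g' \<in> ext N f a' 0" by auto
  have IH: "length g' = length f + 0 \<and> prod_list (map (\<lambda>B. h (card B)) g') = h 1 ^ 0 * (\<Prod>l<length f. h (card (f!l) + a'!l))"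
    using 3 a g' by auto
  have cb: "card (bx N B c) = card B + c" using 3 a by (auto simp: bx_def)
  show ?case using IH cb a unfolding g by (simp add: prod.lessThan_Suc_shift del: prod.lessThan_Suc)
next
  case (4 N B f a y)
  from 4 obtain c a' where a: "a = c # a'" by (cases a) auto
  have cb: "card (bx N B c) = card B + c" using 4 a by (auto simp: bx_def)
  from "4.prems"(1) have "g \<in> (Cons {N}) ` ext N (B#f) a y \<or> g \<in> (Cons (bx N B (hd a))) ` ext N f (tl a) (Suc y)"
    by simp
  then show ?case
  proof
    assume "g \<in> (Cons {N}) ` ext N (B#f) a y"
    then obtain g' where g: "g = {N} # g'" and g': "g' \<in> ext N (B#f) a y" by auto
    have IH: "length g' = length (B#f) + y \<and> prod_list (map (\<lambda>B. h (card B)) g') = h 1 ^ y * (\<Prod>l<length (B#f). h (card ((B#f)!l) + a!l))"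
      using "4.IH"(1)[OF g'] 4 by auto
    show ?thesis using IH unfolding g by (simp add: mult.assoc)
  next
    assume "g \<in> (Cons (bx N B (hd a))) ` ext N f (tl a) (Suc y)"
    then obtain g' where g: "g = bx N B c # g'" and g': "g' \<in> ext N f a' (Suc y)" using a by auto
    have IH: "length g' = length f + Suc y \<and> prod_list (map (\<lambda>B. h (card B)) g') = h 1 ^ Suc y * (\<Prod>l<length f. h (card (f!l) + a'!l))"
      using "4.IH"(2)[of g'] g' 4 a by auto
    show ?thesis using IH cb a unfolding g by (simp add: prod.lessThan_Suc_shift mult_ac del: prod.lessThan_Suc)
  qed
qed

lemma prod_list_idx: "prod_list (map h xs) = (\<Prod>l<length xs. h (xs!l))"
  by (induction xs) (simp_all add: prod.lessThan_Suc_shift del: prod.lessThan_Suc)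

lemma meas_Int: "measure (measure_pmf p) (A \<inter> set_pmf p) = measure (measure_pmf p) A"
  by (simp add: measure_def emeasure_Int_set_pmf)


lemma w_step:
  fixes \<alpha> \<theta> :: real
  assumes "1 \<le> m" "m \<le> n" "c \<in> {0,1}" "\<theta> + real n > 0"
  shows "pochhammer (1-\<alpha>) (m + c - 1) * pochhammer (\<theta>+\<alpha>) (Suc n - (m + c))
     = (pochhammer (1-\<alpha>) (m-1) * pochhammer (\<theta>+\<alpha>) (n - m)) * ((\<theta> + real n) * bern c ((real m - \<alpha>)/(\<theta> + real n)))"
proof (cases "c = 0")
  case True
  have e: "Suc n - m = Suc (n - m)" using assms by simp
  have r: "real (n - m) = real n - real m" using assms by simp
  have b: "(\<theta> + real n) * bern 0 ((real m - \<alpha>)/(\<theta> + real n)) = \<theta> + \<alpha> + real (n - m)"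
    using assms(4) r by (simp add: bern_def field_simps)
  show ?thesis using True e b by (simp add: pochhammer_Suc)
next
  case False
  then have c: "c = 1" using assms by auto
  have e: "m + 1 - 1 = Suc (m - 1)" "Suc n - (m + 1) = n - m" using assms by auto
  have r: "real (m - 1) = real m - 1" using assms by simp
  have b: "(\<theta> + real n) * bern 1 ((real m - \<alpha>)/(\<theta> + real n)) = 1 - \<alpha> + real (m - 1)"
    using assms(4) r by (simp add: bern_def field_simps)
  show ?thesis unfolding c e b by (simp add: pochhammer_Suc)
qed

theorem theorem1:
  fixes \<alpha> \<theta> :: real and V :: "nat \<Rightarrow> nat \<Rightarrow> real" and P :: "nat \<Rightarrow> nat set list pmf"
    and n k y :: nat and f :: "nat set list" and a :: "nat list"
  assumes model: "gibbs_feature_model \<alpha> \<theta> V P"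
    and n: "n \<ge> 1"
    and f: "ofa n f" and k: "length f = k"
    and pos: "pmf (P n) f > 0"
    and a: "length a = k" "set a \<subseteq> {0, 1}"
  shows "measure_pmf.prob (P (Suc n))
           {g. restr n g = f \<and> new_feats n g = y \<and> (\<forall>l<k. old_ind n g l = a ! l)}
         / measure_pmf.prob (P (Suc n)) {g. restr n g = f}
       = real ((k + y) choose k) * V (Suc n) (k + y) / V n k
         * (pochhammer (\<theta> + \<alpha>) n) ^ y * (\<theta> + real n) ^ k
         * (\<Prod>l<k. bern (a ! l) ((real (card (f ! l)) - \<alpha>) / (\<theta> + real n)))"
proof -
  define S where "S = {g. restr n g = f \<and> new_feats n g = y \<and> (\<forall>l<k. old_ind n g l = a ! l)}"
  define E where "E = ext (Suc n) f a y"
  define M where "M = P (Suc n)"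
  define w where "w = (\<lambda>m. pochhammer (1 - \<alpha>) (m - 1) * pochhammer (\<theta> + \<alpha>) (Suc n - m))"
  define w0 where "w0 = (\<lambda>m. pochhammer (1 - \<alpha>) (m - 1) * pochhammer (\<theta> + \<alpha>) (n - m))"
  define bb where "bb = (\<lambda>l. bern (a ! l) ((real (card (f ! l)) - \<alpha>) / (\<theta> + real n)))"
  have al: "\<alpha> < 1" "\<theta> > -\<alpha>" using model by (auto simp: gibbs_feature_model_def)
  have tn: "\<theta> + real n > 0" using al n by simp
  have supp: "set_pmf M \<subseteq> {g. ofa (Suc n) g}" using model by (auto simp: gibbs_feature_model_def M_def)
  have pmfM: "\<And>g. ofa (Suc n) g \<Longrightarrow> pmf M g = gibbs_efpf \<alpha> \<theta> V (Suc n) (map card g)"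
    using model by (auto simp: gibbs_feature_model_def M_def)
  have pmfn: "pmf (P n) f = gibbs_efpf \<alpha> \<theta> V n (map card f)"
    using model f n by (auto simp: gibbs_feature_model_def)
  have cons: "map_pmf (restr n) M = P n"
    using model n by (auto simp: gibbs_feature_model_def M_def)
  have hf: "\<forall>B\<in>set f. B \<noteq> {} \<and> B \<subseteq> {1..n}" using f by (auto simp: ofa_def)
  have hf2: "\<forall>B\<in>set f. B \<noteq> {} \<and> Suc n \<notin> B" using hf by fastforce
  have hf3: "\<forall>B\<in>set f. finite B \<and> Suc n \<notin> B" using hf hf2 by (auto intro: finite_subset)
  have ak: "length a = length f" using a k by simp
  have SE: "S \<inter> set_pmf M = E \<inter> set_pmf M"
  proof
    show "S \<inter> set_pmf M \<subseteq> E \<inter> set_pmf M"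
      using ext_sub[OF hf ak a(2)] supp k unfolding S_def E_def by blast
    show "E \<inter> set_pmf M \<subseteq> S \<inter> set_pmf M"
      using ext_sup[OF _ hf ak a(2)] k unfolding S_def E_def by blast
  qed
  have const: "\<And>g. g \<in> E \<Longrightarrow> pmf M g = V (Suc n) (k + y) * (w 1 ^ y * (\<Prod>l<k. w (card (f!l) + a!l)))"
  proof -
    fix g assume g: "g \<in> E"
    have og: "ofa (Suc n) g" using ext_sup[OF g[unfolded E_def] hf ak a(2)] by simp
    have pr: "length g = length f + y \<and> prod_list (map (\<lambda>B. w (card B)) g) = w 1 ^ y * (\<Prod>l<length f. w (card (f!l) + a!l))"
      using ext_prop[OF g[unfolded E_def] hf3 ak a(2)] .
    have "pmf M g = V (Suc n) (length g) * prod_list (map (\<lambda>B. w (card B)) g)"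
      using pmfM[OF og] by (simp add: gibbs_efpf_def w_def comp_def)
    then show "pmf M g = V (Suc n) (k + y) * (w 1 ^ y * (\<Prod>l<k. w (card (f!l) + a!l)))"
      using pr k by simp
  qed
  have num: "measure_pmf.prob M S = real (card E) * (V (Suc n) (k + y) * (w 1 ^ y * (\<Prod>l<k. w (card (f!l) + a!l))))"
  proof -
    have "measure_pmf.prob M S = measure_pmf.prob M (E \<inter> set_pmf M)"
      using meas_Int[of M S] SE by simp
    also have "\<dots> = measure_pmf.prob M E" by (rule meas_Int)
    also have "\<dots> = sum (pmf M) E" by (simp add: measure_measure_pmf_finite E_def ext_finite)
    also have "\<dots> = real (card E) * (V (Suc n) (k + y) * (w 1 ^ y * (\<Prod>l<k. w (card (f!l) + a!l))))"
      using const by simp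
    finally show ?thesis .
  qed
  have cE: "card E = (k + y) choose k" using ext_card[OF hf2] k unfolding E_def by simp
  have den: "measure_pmf.prob M {g. restr n g = f} = V n k * (\<Prod>l<k. w0 (card (f!l)))"
  proof -
    have "measure_pmf.prob M {g. restr n g = f} = measure_pmf.prob (map_pmf (restr n) M) {f}"
      by (simp add: vimage_def)
    also have "\<dots> = pmf (P n) f" using cons by (simp add: measure_pmf_single)
    also have "\<dots> = V n k * (\<Prod>l<k. w0 (card (f!l)))"
      using pmfn k by (simp add: gibbs_efpf_def w0_def prod_list_idx)
    finally show ?thesis .
  qed
  have w1: "w 1 = pochhammer (\<theta> + \<alpha>) n" by (simp add: w_def)
  have ws: "\<And>l. l < k \<Longrightarrow> w (card (f!l) + a!l) = w0 (card (f!l)) * ((\<theta> + real n) * bb l)"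
  proof -
    fix l assume l: "l < k"
    have fl: "f!l \<in> set f" using l k by simp
    have fin: "finite (f!l)" "f!l \<noteq> {}" using hf fl by (auto intro: finite_subset)
    have m1: "1 \<le> card (f!l)" using fin by (simp add: Suc_le_eq card_gt_0_iff)
    have m2: "card (f!l) \<le> n" using hf fl card_mono[of "{1..n}" "f!l"] by auto
    have c: "a!l \<in> {0,1}" using a l by (auto dest: nth_mem)
    show "w (card (f!l) + a!l) = w0 (card (f!l)) * ((\<theta> + real n) * bb l)"
      unfolding w_def w0_def bb_def using w_step[OF m1 m2 c tn] by simp
  qed
  have prodeq: "(\<Prod>l<k. w (card (f!l) + a!l)) = (\<Prod>l<k. w0 (card (f!l))) * ((\<theta> + real n) ^ k * (\<Prod>l<k. bb l))"
    using ws by (simp add: prod.distrib)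
  have D: "V n k * (\<Prod>l<k. w0 (card (f!l))) > 0" using pos pmfn k
    by (simp add: gibbs_efpf_def w0_def prod_list_idx)
  then have D1: "V n k \<noteq> 0" "(\<Prod>l<k. w0 (card (f!l))) \<noteq> 0"
    by (metis mult_zero_left mult_zero_right less_irrefl)+
  have num2: "measure_pmf.prob M S = real ((k + y) choose k) * V (Suc n) (k + y) * (pochhammer (\<theta> + \<alpha>) n ^ y
      * ((\<Prod>l<k. w0 (card (f!l))) * ((\<theta> + real n) ^ k * (\<Prod>l<k. bb l))))"
    unfolding num cE w1 prodeq by simp
  show ?thesis
    unfolding S_def[symmetric] M_def[symmetric] bb_def[symmetric] num2 den
    using D1 by (simp add: field_simps)
qed

end
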